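(* Let $G$ be a $(C_4,\text{diamond})$-free graph and let $AB$ and $A'B'$ be two edges of $F_k(G)$ in the same ladder class. Then $A\triangle B=A'\triangle B'$.
   Context: $F_k(G)$ is the graph on the $k$-subsets of $V(G)$ with $A,B$ adjacent iff $A\triangle B$ is an edge of $G$. A diamond is $K_4$ minus an edge; $(C_4,\text{diamond})$-free means no induced $4$-cycle and no induced diamond. A ladder is a graph isomorphic to $K_2\square P_m$ (Cartesian product of an edge with vertices $x,y$ and a path $P_m$ with $m\ge1$ edges and vertices $v_1,\dots,v_{m+1}$); for $m\ge2$ its rungs are the edges $(x,v_i)(y,v_i)$, and for $m=1$ the rungs may be either of the two pairs of disjoint edges of the $4$-cycle. Two edges $e,f$ of a graph $F$ are connected by a ladder if some induced subgraph of $F$ isomorphic to a ladder has $e$ and $f$ as rungs. The ladder classes of $F$ are the equivalence classes of the (smallest equivalence relation containing the) relation "connected by a ladder" on $E(F)$. *)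

theory Defs
  imports Main
begin

definition simple_graph :: "'a set \<Rightarrow> 'a set set \<Rightarrow> bool" where
  "simple_graph V E \<longleftrightarrow> (\<forall>e\<in>E. \<exists>u v. u \<in> V \<and> v \<in> V \<and> u \<noteq> v \<and> e = {u, v})"

definition adj :: "'a set set \<Rightarrow> 'a \<Rightarrow> 'a \<Rightarrow> bool" where
  "adj E u v \<longleftrightarrow> {u, v} \<in> E"

definition symdiff :: "'a set \<Rightarrow> 'a set \<Rightarrow> 'a set" where
  "symdiff A B = (A - B) \<union> (B - A)"

definition C4_free :: "'a set \<Rightarrow> 'a set set \<Rightarrow> bool" where
  "C4_free V E \<longleftrightarrow> \<not> (\<exists>a\<in>V. \<exists>b\<in>V. \<exists>c\<in>V. \<exists>d\<in>V. distinct [a, b, c, d] \<and>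
      adj E a b \<and> adj E b c \<and> adj E c d \<and> adj E d a \<and> \<not> adj E a c \<and> \<not> adj E b d)"

definition diamond_free :: "'a set \<Rightarrow> 'a set set \<Rightarrow> bool" where
  "diamond_free V E \<longleftrightarrow> \<not> (\<exists>a\<in>V. \<exists>b\<in>V. \<exists>c\<in>V. \<exists>d\<in>V. distinct [a, b, c, d] \<and>
      adj E a b \<and> adj E b c \<and> adj E c d \<and> adj E d a \<and> adj E b d \<and> \<not> adj E a c)"

definition token_vertices :: "'a set \<Rightarrow> nat \<Rightarrow> 'a set set" where
  "token_vertices V k = {A. A \<subseteq> V \<and> finite A \<and> card A = k}"

definition token_edges :: "'a set \<Rightarrow> 'a set set \<Rightarrow> nat \<Rightarrow> 'a set set set" where
  "token_edges V E k = {{A, B} | A B. A \<in> token_vertices V k \<and> B \<in> token_vertices V k \<and> symdiff A B \<in> E}"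

text \<open>Adjacency in the ladder K2 \<box> P_m, vertices (i,j) with i \<in> {0,1}, j \<in> {0..m}.\<close>
definition ladder_verts :: "nat \<Rightarrow> (nat \<times> nat) set" where
  "ladder_verts m = {0, 1} \<times> {0..m}"

definition ladder_adj :: "nat \<times> nat \<Rightarrow> nat \<times> nat \<Rightarrow> bool" where
  "ladder_adj p q \<longleftrightarrow> (fst p = fst q \<and> (snd q = snd p + 1 \<or> snd p = snd q + 1))
                      \<or> (snd p = snd q \<and> fst p \<noteq> fst q)"

definition induced_ladder :: "'b set \<Rightarrow> 'b set set \<Rightarrow> nat \<Rightarrow> (nat \<times> nat \<Rightarrow> 'b) \<Rightarrow> bool" where
  "induced_ladder W F m phi \<longleftrightarrow> m \<ge> 1 \<and> inj_on phi (ladder_verts m) \<and>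
     phi ` ladder_verts m \<subseteq> W \<and>
     (\<forall>p\<in>ladder_verts m. \<forall>q\<in>ladder_verts m. ({phi p, phi q} \<in> F \<longleftrightarrow> ladder_adj p q))"

text \<open>Rungs: for every m the edges phi(0,i)phi(1,i); for m = 1 alternatively the other pair of
  disjoint edges of the 4-cycle.\<close>
definition connected_by_ladder :: "'b set \<Rightarrow> 'b set set \<Rightarrow> 'b set \<Rightarrow> 'b set \<Rightarrow> bool" where
  "connected_by_ladder W F e f \<longleftrightarrow> (\<exists>m phi. induced_ladder W F m phi \<and>
     ((\<exists>i\<le>m. \<exists>j\<le>m. e = {phi (0, i), phi (1, i)} \<and> f = {phi (0, j), phi (1, j)}) \<or>
      (m = 1 \<and> (\<exists>i\<le>1. \<exists>j\<le>1. e = {phi (i, 0), phi (i, 1)} \<and> f = {phi (j, 0), phi (j, 1)}))))"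

definition ladder_rel :: "'b set \<Rightarrow> 'b set set \<Rightarrow> ('b set \<times> 'b set) set" where
  "ladder_rel W F = {(e, f). e \<in> F \<and> f \<in> F \<and> connected_by_ladder W F e f}"

definition same_ladder_class :: "'b set \<Rightarrow> 'b set set \<Rightarrow> 'b set \<Rightarrow> 'b set \<Rightarrow> bool" where
  "same_ladder_class W F e f \<longleftrightarrow> e \<in> F \<and> f \<in> F \<and>
     (e, f) \<in> (ladder_rel W F \<union> (ladder_rel W F)\<inverse>)\<^sup>*"

end

theory Submission
  imports Defs
begin


lemma edge_el:
  assumes "simple_graph V E" "e \<in> E" "p \<in> e" "q \<in> e" "p \<noteq> q"
  shows "e = {p, q}"
proof -
  obtain u v where "e = {u, v}" using assms(1,2) unfolding simple_graph_def by blast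
  then show ?thesis using assms(3-5) by auto
qed

lemma edge_no3:
  assumes "simple_graph V E" "e \<in> E" "p \<in> e" "q \<in> e" "r \<in> e" "distinct [p,q,r]"
  shows False
proof -
  obtain u v where "e = {u, v}" using assms(1,2) unfolding simple_graph_def by blast
  then show ?thesis using assms(3-6) by auto
qed

lemma edge_V:
  assumes "simple_graph V E" "{p, q} \<in> E"
  shows "p \<in> V \<and> q \<in> V \<and> p \<noteq> q"
proof -
  obtain u v where "{p, q} = {u, v}" "u \<in> V" "v \<in> V" "u \<noteq> v"
    using assms unfolding simple_graph_def by blast
  then show ?thesis by (auto simp: doubleton_eq_iff)
qed

lemma no_cycle:
  assumes sg: "simple_graph V E" and c4: "C4_free V E" and dm: "diamond_free V E"
    and "distinct [p,q,r,s]" "{p,q} \<in> E" "{q,r} \<in> E" "{r,s} \<in> E" "{s,p} \<in> E" "{p,r} \<notin> E"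
  shows False
proof -
  have V: "p \<in> V" "q \<in> V" "r \<in> V" "s \<in> V" using edge_V[OF sg] assms by blast+
  show False
  proof (cases "{q,s} \<in> E")
    case True
    have "\<not> (distinct [p, q, r, s] \<and> {p, q} \<in> E \<and> {q, r} \<in> E \<and> {r, s} \<in> E \<and> {s, p} \<in> E \<and> {q, s} \<in> E \<and> {p, r} \<notin> E)"
      using dm V unfolding diamond_free_def adj_def by blast
    then show ?thesis using True assms by blast
  next
    case False
    have "\<not> (distinct [p, q, r, s] \<and> {p, q} \<in> E \<and> {q, r} \<in> E \<and> {r, s} \<in> E \<and> {s, p} \<in> E \<and> {p, r} \<notin> E \<and> {q, s} \<notin> E)"
      using c4 V unfolding C4_free_def adj_def by blast
    then show ?thesis using False assms by blast
  qed
qed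

lemma edge_move:
  assumes sg: "simple_graph V E" and fin: "finite A" "finite B" and cd: "card A = card B"
    and e: "symdiff A B \<in> E"
  shows "\<exists>a b. a \<in> A \<and> a \<notin> B \<and> b \<in> B \<and> b \<notin> A \<and> B = insert b (A - {a})"
proof -
  obtain u v where uv: "symdiff A B = {u, v}" "u \<noteq> v" using e sg unfolding simple_graph_def by blast
  have c1: "card A = card (A - B) + card (A \<inter> B)"
  proof -
    have "(A - B) \<inter> (A \<inter> B) = {}" by blast
    then show ?thesis using fin(1) card_Un_disjoint[of "A - B" "A \<inter> B"] by (simp add: Un_Diff_Int)
  qed
  have c2: "card B = card (B - A) + card (A \<inter> B)"
  proof -
    have "(B - A) \<inter> (A \<inter> B) = {}" by blast
    moreover have "(B - A) \<union> (A \<inter> B) = B" by blast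
    ultimately show ?thesis using fin(2) card_Un_disjoint[of "B - A" "A \<inter> B"] by simp
  qed
  have ceq: "card (A - B) = card (B - A)" using c1 c2 cd by simp
  have un: "(A - B) \<union> (B - A) = {u, v}" using uv(1) unfolding symdiff_def .
  have fAB: "finite (A - B)" "finite (B - A)" using fin by auto
  have ne1: "A - B \<noteq> {}"
  proof
    assume h: "A - B = {}"
    then have "card (A - B) = 0" by (simp only: card.empty)
    then have "card (B - A) = 0" using ceq by linarith
    then have "B - A = {}" using fAB(2) by simp
    then show False using h un by blast
  qed
  have ne2: "B - A \<noteq> {}"
  proof
    assume h: "B - A = {}"
    then have "card (B - A) = 0" by (simp only: card.empty)
    then have "card (A - B) = 0" using ceq by linarith
    then have "A - B = {}" using fAB(1) by simp
    then show False using h un by blast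
  qed
  obtain a where a: "a \<in> A - B" using ne1 by blast
  obtain b where b: "b \<in> B - A" using ne2 by blast
  have ab: "a \<noteq> b" using a b by blast
  have "{a, b} \<subseteq> {u, v}" using a b un by blast
  then have abuv: "{a, b} = {u, v}" using ab uv(2) by (auto simp: doubleton_eq_iff)
  have "A - B = {a}" using un abuv a b by blast
  moreover have "B - A = {b}" using un abuv a b by blast
  ultimately have "a \<in> A \<and> a \<notin> B \<and> b \<in> B \<and> b \<notin> A" "B = insert b (A - {a})" by auto
  then show ?thesis by blast
qed



lemma key:
  assumes sg: "simple_graph V E" and c4: "C4_free V E" and dm: "diamond_free V E"
    and AV: "A \<in> token_vertices V k" and BV: "B \<in> token_vertices V k"
    and CV: "C \<in> token_vertices V k" and DV: "D \<in> token_vertices V k"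
    and eAB: "symdiff A B \<in> E" and eBC: "symdiff B C \<in> E"
    and eCD: "symdiff C D \<in> E" and eAD: "symdiff A D \<in> E"
    and nAC: "symdiff A C \<notin> E" and nBD: "symdiff B D \<notin> E"
    and neq: "A \<noteq> C" "B \<noteq> D" "C \<noteq> D"
  shows "symdiff A B = symdiff D C"
proof -
  have fc: "finite A" "finite B" "finite C" "finite D" "card A = card B" "card A = card D"
    "card B = card C"
    using AV BV CV DV unfolding token_vertices_def by auto
  obtain a b where ab: "a \<in> A" "a \<notin> B" "b \<in> B" "b \<notin> A" and Bd: "B = insert b (A - {a})"
    using edge_move[OF sg fc(1) fc(2) fc(5) eAB] by blast
  obtain x y where xy: "x \<in> A" "x \<notin> D" "y \<in> D" "y \<notin> A" and Dd: "D = insert y (A - {x})"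
    using edge_move[OF sg fc(1) fc(4) fc(6) eAD] by blast
  obtain c d where cd: "c \<in> B" "c \<notin> C" "d \<in> C" "d \<notin> B" and Cd: "C = insert d (B - {c})"
    using edge_move[OF sg fc(2) fc(3) fc(7) eBC] by blast
  have sAB: "symdiff A B = {a, b}" using ab Bd unfolding symdiff_def by auto
  have sAD: "symdiff A D = {x, y}" using xy Dd unfolding symdiff_def by auto
  have sBC: "symdiff B C = {c, d}" using cd Cd unfolding symdiff_def by auto
  have Eab: "{a, b} \<in> E" using eAB sAB by simp
  have Exy: "{x, y} \<in> E" "{y, x} \<in> E" using eAD sAD by (simp_all add: insert_commute)
  have Ecd: "{c, d} \<in> E" using eBC sBC by simp
  have ba: "b \<noteq> a" using ab by auto
  have yx: "y \<noteq> x" using xy by auto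
  have c_cases: "c = b \<or> (c \<in> A \<and> c \<noteq> a)" using cd(1) Bd by auto
  have d_cases: "d = a \<or> (d \<notin> A \<and> d \<noteq> b)" using cd(4) Bd ab by auto
  consider (1) "c = b" "d = a" | (2) "c = b" "d \<notin> A" "d \<noteq> b"
    | (3) "c \<in> A" "c \<noteq> a" "d = a" | (4) "c \<in> A" "c \<noteq> a" "d \<notin> A" "d \<noteq> b"
    using c_cases d_cases by blast
  then show ?thesis
  proof cases
    case 1
    have "C = A" using Cd Bd ab 1 by auto
    then show ?thesis using neq by simp
  next
    case 2
    have Ce: "C = insert d (A - {a})" using Cd Bd ab 2 by auto
    have sAC: "symdiff A C = {a, d}" using Ce ab 2 unfolding symdiff_def by auto
    have nad: "{a, d} \<notin> E" using nAC sAC by simp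
    have Ebd: "{b, d} \<in> E" using Ecd 2 by simp
    show ?thesis
    proof (cases "x = a")
      case True
      have dy: "d \<noteq> y" using Ce Dd True neq(3) by auto
      have by': "y \<noteq> b" using Bd Dd True neq(2) by auto
      have sCD: "symdiff C D = {d, y}" using Ce Dd True dy 2 xy ab unfolding symdiff_def by auto
      have Edy: "{d, y} \<in> E" using eCD sCD by simp
      have "distinct [a, b, d, y]" using ab xy 2 dy by' True by auto
      moreover have "{y, a} \<in> E" using Exy(2) True by simp
      ultimately have False using no_cycle[OF sg c4 dm _ Eab Ebd Edy _ nad] by blast
      then show ?thesis ..
    next
      case False
      have dy: "d = y"
      proof (rule ccontr)
        assume "d \<noteq> y"
        have "a \<in> symdiff C D" "x \<in> symdiff C D" "d \<in> symdiff C D"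
          using Ce Dd False \<open>d \<noteq> y\<close> 2 xy ab unfolding symdiff_def by auto
        moreover have "distinct [a, x, d]" using False 2 xy ab by auto
        ultimately show False using edge_no3[OF sg eCD] by blast
      qed
      have sCD: "symdiff C D = {a, x}" using Ce Dd False dy 2 xy ab unfolding symdiff_def by auto
      have Eax: "{x, a} \<in> E" using eCD sCD by (simp add: insert_commute)
      have "distinct [a, b, y, x]" using ab xy 2 dy False by auto
      moreover have "{b, y} \<in> E" using Ebd dy by simp
      moreover have "{a, y} \<notin> E" using nad dy by simp
      ultimately have False using no_cycle[OF sg c4 dm _ Eab _ Exy(2) Eax] by blast
      then show ?thesis ..
    qed
  next
    case 3
    have Ce: "C = insert b (A - {c})" using Cd Bd ab 3 by auto
    have sAC: "symdiff A C = {c, b}" using Ce ab 3 unfolding symdiff_def by auto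
    have nbc: "{b, c} \<notin> E" using nAC sAC by (simp add: insert_commute)
    have Eca: "{c, a} \<in> E" using Ecd 3 by simp
    show ?thesis
    proof (cases "x = c")
      case True
      have by': "y \<noteq> b" using Ce Dd True neq(3) by auto
      have sCD: "symdiff C D = {b, y}" using Ce Dd True by' 3 xy ab unfolding symdiff_def by auto
      have Eby: "{b, y} \<in> E" using eCD sCD by simp
      have "distinct [b, y, c, a]" using ab xy 3 by' True by auto
      moreover have "{y, c} \<in> E" using Exy(2) True by simp
      ultimately have False using no_cycle[OF sg c4 dm _ Eby _ Eca Eab nbc] by blast
      then show ?thesis ..
    next
      case False
      have yb: "y = b"
      proof (rule ccontr)
        assume "y \<noteq> b"
        have "c \<in> symdiff C D" "x \<in> symdiff C D" "b \<in> symdiff C D"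
          using Ce Dd False \<open>y \<noteq> b\<close> 3 xy ab unfolding symdiff_def by auto
        moreover have "distinct [c, x, b]" using False 3 xy ab by auto
        ultimately show False using edge_no3[OF sg eCD] by blast
      qed
      have ax: "a \<noteq> x" using Bd Dd yb neq(2) by auto
      have sCD: "symdiff C D = {c, x}" using Ce Dd False yb 3 xy ab unfolding symdiff_def by auto
      have Ecx: "{x, c} \<in> E" using eCD sCD by (simp add: insert_commute)
      have sBD: "symdiff B D = {a, x}" using Bd Dd yb ax xy ab unfolding symdiff_def by auto
      have nax: "{a, x} \<notin> E" using nBD sBD by simp
      have "distinct [a, b, x, c]" using ab xy 3 ax False by auto
      moreover have "{b, x} \<in> E" using Exy(2) yb by simp
      ultimately have False using no_cycle[OF sg c4 dm _ Eab _ Ecx Eca nax] by blast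
      then show ?thesis ..
    qed
  next
    case 4
    have Ce: "C = insert d (insert b (A - {a} - {c}))" using Cd Bd ab 4 by auto
    have xac: "x = a \<or> x = c"
    proof (rule ccontr)
      assume h: "\<not> (x = a \<or> x = c)"
      have "a \<in> symdiff C D" "x \<in> symdiff C D" "c \<in> symdiff C D"
        using Ce Dd h 4 xy ab unfolding symdiff_def by auto
      moreover have "distinct [a, x, c]" using h 4 by auto
      ultimately show False using edge_no3[OF sg eCD] by blast
    qed
    have ybd: "y = b \<or> y = d"
    proof (rule ccontr)
      assume h: "\<not> (y = b \<or> y = d)"
      have "b \<in> symdiff C D" "y \<in> symdiff C D" "d \<in> symdiff C D"
        using Ce Dd h 4 xy ab unfolding symdiff_def by auto
      moreover have "distinct [b, y, d]" using h 4 by auto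
      ultimately show False using edge_no3[OF sg eCD] by blast
    qed
    consider (aa) "x = a" "y = b" | (ad) "x = a" "y = d" | (cb) "x = c" "y = b" | (cd) "x = c" "y = d"
      using xac ybd by blast
    then show ?thesis
    proof cases
      case aa
      then have "B = D" using Bd Dd by simp
      then show ?thesis using neq by simp
    next
      case ad
      have sCD: "symdiff C D = {c, b}" using Ce Dd ad 4 xy ab unfolding symdiff_def by auto
      have Ebc: "{b, c} \<in> E" using eCD sCD by (simp add: insert_commute)
      have sBD: "symdiff B D = {b, d}" using Bd Dd ad 4 xy ab unfolding symdiff_def by auto
      have nbd: "{b, d} \<notin> E" using nBD sBD by simp
      have "distinct [b, c, d, a]" using ab xy 4 ad by auto
      moreover have "{d, a} \<in> E" using Exy(2) ad by simp
      ultimately have False using no_cycle[OF sg c4 dm _ Ebc Ecd _ Eab nbd] by blast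
      then show ?thesis ..
    next
      case cb
      have sCD: "symdiff C D = {a, d}" using Ce Dd cb 4 xy ab unfolding symdiff_def by auto
      have Ead: "{d, a} \<in> E" using eCD sCD by (simp add: insert_commute)
      have sBD: "symdiff B D = {a, c}" using Bd Dd cb 4 xy ab unfolding symdiff_def by auto
      have nac: "{a, c} \<notin> E" using nBD sBD by simp
      have "distinct [a, b, c, d]" using ab xy 4 cb by auto
      moreover have "{b, c} \<in> E" using Exy(2) cb by simp
      ultimately have False using no_cycle[OF sg c4 dm _ Eab _ Ecd Ead nac] by blast
      then show ?thesis ..
    next
      case cd
      have "symdiff D C = {a, b}" using Ce Dd cd 4 xy ab unfolding symdiff_def by auto
      then show ?thesis using sAB by simp
    qed
  qed
qed



lemma symdiff_comm: "symdiff X Y = symdiff Y X" by (auto simp: symdiff_def)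

lemma lab_eq: "\<Union>{X, Y} - \<Inter>{X, Y} = symdiff X Y" by (auto simp: symdiff_def)

lemma tok_edge_sd:
  assumes "{X, Y} \<in> token_edges V E k" shows "symdiff X Y \<in> E"
proof -
  have "\<exists>P Q. {X, Y} = {P, Q} \<and> P \<in> token_vertices V k \<and> Q \<in> token_vertices V k \<and> symdiff P Q \<in> E"
    using assms unfolding token_edges_def by (simp only: mem_Collect_eq)
  then obtain P Q where PQ: "{X, Y} = {P, Q}" and e: "symdiff P Q \<in> E"
    by meson
  have "(X = P \<and> Y = Q) \<or> (X = Q \<and> Y = P)" using PQ by (simp only: doubleton_eq_iff)
  then show ?thesis
  proof
    assume "X = P \<and> Y = Q" then show ?thesis using e by simp
  next
    assume "X = Q \<and> Y = P" then show ?thesis using e symdiff_comm[of P Q] by simp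
  qed
qed

lemma tok_nonedge:
  assumes "X \<in> token_vertices V k" "Y \<in> token_vertices V k" "{X, Y} \<notin> token_edges V E k"
  shows "symdiff X Y \<notin> E"
proof
  assume h: "symdiff X Y \<in> E"
  have "{X, Y} \<in> token_edges V E k" unfolding token_edges_def
    using assms(1,2) h by blast
  then show False using assms(3) by contradiction
qed

lemma ladder_facts:
  assumes L: "induced_ladder (token_vertices V k) (token_edges V E k) m phi"
  shows "\<And>p q. p \<in> ladder_verts m \<Longrightarrow> q \<in> ladder_verts m \<Longrightarrow> ladder_adj p q \<Longrightarrow>
            symdiff (phi p) (phi q) \<in> E"
    and "\<And>p q. p \<in> ladder_verts m \<Longrightarrow> q \<in> ladder_verts m \<Longrightarrow> \<not> ladder_adj p q \<Longrightarrow>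
            symdiff (phi p) (phi q) \<notin> E"
    and "\<And>p q. p \<in> ladder_verts m \<Longrightarrow> q \<in> ladder_verts m \<Longrightarrow> p \<noteq> q \<Longrightarrow> phi p \<noteq> phi q"
    and "\<And>p. p \<in> ladder_verts m \<Longrightarrow> phi p \<in> token_vertices V k"
proof -
  have I: "inj_on phi (ladder_verts m)" and S: "phi ` ladder_verts m \<subseteq> token_vertices V k"
    and R: "\<forall>p\<in>ladder_verts m. \<forall>q\<in>ladder_verts m.
              ({phi p, phi q} \<in> token_edges V E k \<longleftrightarrow> ladder_adj p q)"
    using L unfolding induced_ladder_def by blast+
  show "symdiff (phi p) (phi q) \<in> E" if "p \<in> ladder_verts m" "q \<in> ladder_verts m" "ladder_adj p q" for p q
  proof -
    have "{phi p, phi q} \<in> token_edges V E k" using R that by blast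
    then show ?thesis by (rule tok_edge_sd)
  qed
  show "symdiff (phi p) (phi q) \<notin> E" if "p \<in> ladder_verts m" "q \<in> ladder_verts m" "\<not> ladder_adj p q" for p q
  proof -
    have "{phi p, phi q} \<notin> token_edges V E k" using R that by blast
    moreover have "phi p \<in> token_vertices V k" "phi q \<in> token_vertices V k" using S that by auto
    ultimately show ?thesis using tok_nonedge by blast
  qed
  show "phi p \<noteq> phi q" if "p \<in> ladder_verts m" "q \<in> ladder_verts m" "p \<noteq> q" for p q
    using I that inj_onD by metis
  show "phi p \<in> token_vertices V k" if "p \<in> ladder_verts m" for p
    using S that by auto
qed

lemma ladder_rungs:
  assumes sg: "simple_graph V E" and c4: "C4_free V E" and dm: "diamond_free V E"
    and L: "induced_ladder (token_vertices V k) (token_edges V E k) m phi"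
  shows "i \<le> m \<Longrightarrow> symdiff (phi (0, i)) (phi (1, i)) = symdiff (phi (0, 0)) (phi (1, 0))"
proof (induction i)
  case 0
  then show ?case by simp
next
  case (Suc i)
  note F = ladder_facts[OF L]
  have V: "(0, i) \<in> ladder_verts m" "(1, i) \<in> ladder_verts m"
    "(0, Suc i) \<in> ladder_verts m" "(1, Suc i) \<in> ladder_verts m"
    using Suc.prems by (auto simp: ladder_verts_def)
  have "symdiff (phi (0, i)) (phi (1, i)) = symdiff (phi (0, Suc i)) (phi (1, Suc i))"
  proof (rule key[OF sg c4 dm])
    show "phi (0, i) \<in> token_vertices V k" "phi (1, i) \<in> token_vertices V k"
      "phi (1, Suc i) \<in> token_vertices V k" "phi (0, Suc i) \<in> token_vertices V k"
      using F(4) V by auto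
    show "symdiff (phi (0, i)) (phi (1, i)) \<in> E"
      by (rule F(1)) (use V in \<open>auto simp: ladder_adj_def\<close>)
    show "symdiff (phi (1, i)) (phi (1, Suc i)) \<in> E"
      by (rule F(1)) (use V in \<open>auto simp: ladder_adj_def\<close>)
    show "symdiff (phi (1, Suc i)) (phi (0, Suc i)) \<in> E"
      by (rule F(1)) (use V in \<open>auto simp: ladder_adj_def\<close>)
    show "symdiff (phi (0, i)) (phi (0, Suc i)) \<in> E"
      by (rule F(1)) (use V in \<open>auto simp: ladder_adj_def\<close>)
    show "symdiff (phi (0, i)) (phi (1, Suc i)) \<notin> E"
      by (rule F(2)) (use V in \<open>auto simp: ladder_adj_def\<close>)
    show "symdiff (phi (1, i)) (phi (0, Suc i)) \<notin> E"
      by (rule F(2)) (use V in \<open>auto simp: ladder_adj_def\<close>)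
    show "phi (0, i) \<noteq> phi (1, Suc i)" "phi (1, i) \<noteq> phi (0, Suc i)"
      "phi (1, Suc i) \<noteq> phi (0, Suc i)"
      by (rule F(3); use V in auto)+
  qed
  then show ?case using Suc by simp
qed

lemma ladder_square:
  assumes sg: "simple_graph V E" and c4: "C4_free V E" and dm: "diamond_free V E"
    and L: "induced_ladder (token_vertices V k) (token_edges V E k) 1 phi"
  shows "symdiff (phi (0, 0)) (phi (0, 1)) = symdiff (phi (1, 0)) (phi (1, 1))"
proof -
  note F = ladder_facts[OF L]
  have V: "(0, 0) \<in> ladder_verts 1" "(1, 0) \<in> ladder_verts 1"
    "(0, 1) \<in> ladder_verts 1" "(1, 1) \<in> ladder_verts 1"
    by (auto simp: ladder_verts_def)
  show ?thesis
  proof (rule key[OF sg c4 dm])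
    show "phi (0, 0) \<in> token_vertices V k" "phi (0, 1) \<in> token_vertices V k"
      "phi (1, 1) \<in> token_vertices V k" "phi (1, 0) \<in> token_vertices V k"
      using F(4) V by auto
    show "symdiff (phi (0, 0)) (phi (0, 1)) \<in> E"
      by (rule F(1)) (use V in \<open>auto simp: ladder_adj_def\<close>)
    show "symdiff (phi (0, 1)) (phi (1, 1)) \<in> E"
      by (rule F(1)) (use V in \<open>auto simp: ladder_adj_def\<close>)
    show "symdiff (phi (1, 1)) (phi (1, 0)) \<in> E"
      by (rule F(1)) (use V in \<open>auto simp: ladder_adj_def\<close>)
    show "symdiff (phi (0, 0)) (phi (1, 0)) \<in> E"
      by (rule F(1)) (use V in \<open>auto simp: ladder_adj_def\<close>)
    show "symdiff (phi (0, 0)) (phi (1, 1)) \<notin> E"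
      by (rule F(2)) (use V in \<open>auto simp: ladder_adj_def\<close>)
    show "symdiff (phi (0, 1)) (phi (1, 0)) \<notin> E"
      by (rule F(2)) (use V in \<open>auto simp: ladder_adj_def\<close>)
    show "phi (0, 0) \<noteq> phi (1, 1)" "phi (0, 1) \<noteq> phi (1, 0)" "phi (1, 1) \<noteq> phi (1, 0)"
      by (rule F(3); use V in auto)+
  qed
qed

lemma connected_lab:
  assumes sg: "simple_graph V E" and c4: "C4_free V E" and dm: "diamond_free V E"
    and cl: "connected_by_ladder (token_vertices V k) (token_edges V E k) e f"
  shows "\<Union>e - \<Inter>e = \<Union>f - \<Inter>f"
proof -
  obtain m phi where L: "induced_ladder (token_vertices V k) (token_edges V E k) m phi"
    and c: "(\<exists>i\<le>m. \<exists>j\<le>m. e = {phi (0, i), phi (1, i)} \<and> f = {phi (0, j), phi (1, j)}) \<or>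
      (m = 1 \<and> (\<exists>i\<le>1. \<exists>j\<le>1. e = {phi (i, 0), phi (i, 1)} \<and> f = {phi (j, 0), phi (j, 1)}))"
    using cl unfolding connected_by_ladder_def by blast
  from c show ?thesis
  proof
    assume "\<exists>i\<le>m. \<exists>j\<le>m. e = {phi (0, i), phi (1, i)} \<and> f = {phi (0, j), phi (1, j)}"
    then obtain i j where ij: "i \<le> m" "j \<le> m" and ef: "e = {phi (0, i), phi (1, i)}" "f = {phi (0, j), phi (1, j)}"
      by blast
    have "\<Union>e - \<Inter>e = symdiff (phi (0, i)) (phi (1, i))" unfolding ef(1) by (rule lab_eq)
    moreover have "\<Union>f - \<Inter>f = symdiff (phi (0, j)) (phi (1, j))" unfolding ef(2) by (rule lab_eq)
    ultimately show ?thesis using ladder_rungs[OF sg c4 dm L ij(1)] ladder_rungs[OF sg c4 dm L ij(2)] by simp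
  next
    assume h: "m = 1 \<and> (\<exists>i\<le>1. \<exists>j\<le>1. e = {phi (i, 0), phi (i, 1)} \<and> f = {phi (j, 0), phi (j, 1)})"
    then have L1: "induced_ladder (token_vertices V k) (token_edges V E k) 1 phi" using L by simp
    obtain i j :: nat where "i \<le> 1" "j \<le> 1" "e = {phi (i, 0), phi (i, 1)}" "f = {phi (j, 0), phi (j, 1)}"
      using h by blast
    moreover have "i = 0 \<or> i = 1" "j = 0 \<or> j = 1" using \<open>i \<le> 1\<close> \<open>j \<le> 1\<close> by auto
    ultimately show ?thesis using ladder_square[OF sg c4 dm L1] lab_eq[of "phi (0, 0)" "phi (0, 1)"]
      lab_eq[of "phi (1, 0)" "phi (1, 1)"] by auto
  qed
qed

theorem proposition23:
  fixes V :: "'a set" and E :: "'a set set" and k :: nat and A B A' B' :: "'a set"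
  assumes "finite V" and "simple_graph V E"
    and "C4_free V E" and "diamond_free V E"
    and "{A, B} \<in> token_edges V E k" and "{A', B'} \<in> token_edges V E k"
    and "same_ladder_class (token_vertices V k) (token_edges V E k) {A, B} {A', B'}"
  shows "symdiff A B = symdiff A' B'"
proof -
  let ?R = "ladder_rel (token_vertices V k) (token_edges V E k)"
  have r: "({A, B}, {A', B'}) \<in> (?R \<union> ?R\<inverse>)\<^sup>*"
    using assms(7) unfolding same_ladder_class_def by blast
  have "\<Union>{A, B} - \<Inter>{A, B} = \<Union>{A', B'} - \<Inter>{A', B'}"
    using r
  proof (induction rule: rtrancl_induct)
    case base
    then show ?case by simp
  next
    case (step y z)
    from step.hyps(2) have "\<Union>y - \<Inter>y = \<Union>z - \<Inter>z"
    proof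
      assume "(y, z) \<in> ?R"
      then show ?thesis using connected_lab[OF assms(2-4)] unfolding ladder_rel_def by blast
    next
      assume "(y, z) \<in> ?R\<inverse>"
      then show ?thesis using connected_lab[OF assms(2-4)] unfolding ladder_rel_def by force
    qed
    then show ?case using step.IH by simp
  qed
  then show ?thesis by (simp only: lab_eq)
qed

end
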